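(* In the one-step setting below, $\|\nabla\varepsilon_t^{\rm OGD}(q(x_{t+1}))\|_2\le G^5\big(3\hat G_F^2+\hat G_F^3\eta\big)\eta$.
   Context: One-step setting. $\mathcal X,\mathcal Y\subset\mathbb R^d$ convex compact, $q:\mathcal X\to\mathcal Y$ a smooth bijection with Jacobian $J_q$, $D_R(x\|y)=R(x)-R(y)-\nabla R(y)^\top(x-y)$, and: (A1) There is a twice continuously differentiable, strictly convex $R:\mathcal Y\to\mathbb R$ such that $[\nabla^2R(q(x))]^{-1}=J_q(x)J_q(x)^\top$ for all $x\in\mathcal X$. (A2) There is $G>1$ such that: $q$ is $G$-Lipschitz on $\mathcal X$; the first and second derivatives of $q^{-1}$ are bounded by $G$; $R$ is $1$-strongly convex (Euclidean norm) and smooth with first and third derivatives bounded by $G$; for every $z\in\mathcal Y$ the map $w\mapsto D_R(z\|w)$ is $G$-Lipschitz. Fix $\eta>0$, $x_t\in\mathcal X$, $y_t:=q(x_t)$, $g_t\in\mathbb R^d$ with $\|g_t\|\le\hat G_F$, and $x_{t+1}=\arg\min_{x\in\mathcal X}\{g_t^\top(x-x_t)+\frac1{2\eta}\|x-x_t\|_2^2\}=\Pi_{\mathcal X}(x_t-\eta g_t)$. Let $\varepsilon^q_t(y):=q^{-1}(y)-q^{-1}(y_t)-J_q(x_t)^{-1}(y-y_t)$ and $$\varepsilon_t^{\rm OGD}(y):=g_t^\top\varepsilon^q_t(y)+\tfrac1\eta\Big(\tfrac12\|\varepsilon^q_t(y)\|_2^2+\big\langle J_q(x_t)^{-1}(y-y_t),\varepsilon^q_t(y)\big\rangle\Big).$$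 *)

theory Defs
  imports "HOL-Analysis.Analysis"
begin

definition strict_convex_on :: "'a::real_vector set \<Rightarrow> ('a \<Rightarrow> real) \<Rightarrow> bool" where
  "strict_convex_on S f \<longleftrightarrow> convex S \<and>
     (\<forall>x\<in>S. \<forall>y\<in>S. \<forall>t::real. x \<noteq> y \<and> 0 < t \<and> t < 1 \<longrightarrow>
        f ((1 - t) *\<^sub>R x + t *\<^sub>R y) < (1 - t) * f x + t * f y)"

definition strongly_convex_on :: "real \<Rightarrow> 'a::real_normed_vector set \<Rightarrow> ('a \<Rightarrow> real) \<Rightarrow> bool" where
  "strongly_convex_on \<mu> S f \<longleftrightarrow> convex S \<and>
     (\<forall>x\<in>S. \<forall>y\<in>S. \<forall>t::real. 0 \<le> t \<and> t \<le> 1 \<longrightarrow>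
        f ((1 - t) *\<^sub>R x + t *\<^sub>R y)
          \<le> (1 - t) * f x + t * f y - \<mu> / 2 * t * (1 - t) * (norm (x - y))\<^sup>2)"

definition bregman :: "('a::real_inner \<Rightarrow> real) \<Rightarrow> ('a \<Rightarrow> 'a) \<Rightarrow> 'a \<Rightarrow> 'a \<Rightarrow> real" where
  "bregman R gradR x y = R x - R y - inner (gradR y) (x - y)"

definition eps_q ::
  "(real^'n \<Rightarrow> real^'n) \<Rightarrow> (real^'n \<Rightarrow> real^'n) \<Rightarrow> (real^'n \<Rightarrow> real^'n^'n)
     \<Rightarrow> real^'n \<Rightarrow> real^'n \<Rightarrow> real^'n" where
  "eps_q q qinv Jq xt y = qinv y - qinv (q xt) - matrix_inv (Jq xt) *v (y - q xt)"

definition eps_OGD ::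
  "(real^'n \<Rightarrow> real^'n) \<Rightarrow> (real^'n \<Rightarrow> real^'n) \<Rightarrow> (real^'n \<Rightarrow> real^'n^'n)
     \<Rightarrow> real^'n \<Rightarrow> real^'n \<Rightarrow> real \<Rightarrow> real^'n \<Rightarrow> real" where
  "eps_OGD q qinv Jq xt g \<eta> y =
     inner g (eps_q q qinv Jq xt y)
     + (1 / \<eta>) * ((1/2) * (norm (eps_q q qinv Jq xt y))\<^sup>2
                 + inner (matrix_inv (Jq xt) *v (y - q xt)) (eps_q q qinv Jq xt y))"

end

theory Submission imports Defs begin

lemma bl_mv: "bounded_linear (\<lambda>M::real^'n^'n. M *v k)"
proof -
  have "linear (\<lambda>M::real^'n^'n. M *v k)"
    by (rule linearI) (simp_all add: matrix_vector_mult_add_rdistrib scaleR_matrix_vector_assoc)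
  then show ?thesis by (simp add: linear_conv_bounded_linear)
qed

lemma mvt_mat:
  fixes Dqinv :: "real^'n \<Rightarrow> real^'n^'n" and D2qinv :: "real^'n \<Rightarrow> real^'n \<Rightarrow> real^'n^'n"
  assumes Y: "convex Y" "Y \<subseteq> V"
    and D2: "\<And>y. y \<in> V \<Longrightarrow> (Dqinv has_derivative D2qinv y) (at y)"
    and bd: "\<And>y h k. y \<in> Y \<Longrightarrow> norm (D2qinv y h *v k) \<le> G * norm h * norm k"
    and ab: "a \<in> Y" "b \<in> Y"
  shows "norm ((Dqinv b - Dqinv a) *v k) \<le> G * norm (b - a) * norm k"
proof -
  define z where "z s = a + s *\<^sub>R (b - a)" for s :: real
  have zY: "z s \<in> Y" if "0 \<le> s" "s \<le> 1" for s
  proof -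
    have "z s = (1 - s) *\<^sub>R a + s *\<^sub>R b" by (simp add: z_def algebra_simps)
    then show ?thesis using Y(1) ab that by (simp add: convexD)
  qed
  have der: "((\<lambda>s. Dqinv (z s) *v k) has_derivative (\<lambda>t. D2qinv (z s) (t *\<^sub>R (b - a)) *v k)) (at s)"
    if "0 \<le> s" "s \<le> 1" for s
  proof -
    have z: "(z has_derivative (\<lambda>t. t *\<^sub>R (b - a))) (at s)"
      unfolding z_def by (auto intro!: derivative_eq_intros)
    have "((\<lambda>s. Dqinv (z s)) has_derivative (\<lambda>t. D2qinv (z s) (t *\<^sub>R (b - a)))) (at s)"
      using diff_chain_at[OF z D2[of "z s"]] zY[OF that] Y(2) by (auto simp: o_def)
    from bounded_linear.has_derivative[OF bl_mv this] show ?thesis .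
  qed
  have "continuous_on {0..1} (\<lambda>s. Dqinv (z s) *v k)"
    using der by (meson atLeastAtMost_iff continuous_at_imp_continuous_on has_derivative_continuous)
  from mvt_general[OF zero_less_one this der] obtain s where s: "s \<in> {0<..<1}"
    and le: "norm (Dqinv (z 1) *v k - Dqinv (z 0) *v k) \<le> norm (D2qinv (z s) ((1 - 0) *\<^sub>R (b - a)) *v k)"
    by fastforce
  have "z 1 = b" "z 0 = a" by (auto simp: z_def)
  then have "norm ((Dqinv b - Dqinv a) *v k) \<le> norm (D2qinv (z s) (b - a) *v k)"
    using le by (simp add: matrix_vector_mult_diff_rdistrib)
  also have "\<dots> \<le> G * norm (b - a) * norm k" using bd zY s by auto
  finally show ?thesis .
qed


lemma mvt_vec:
  fixes qinv :: "real^'n \<Rightarrow> real^'n" and Dqinv :: "real^'n \<Rightarrow> real^'n^'n" and D2qinv :: "real^'n \<Rightarrow> real^'n \<Rightarrow> real^'n^'n"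
  assumes Y: "convex Y" "Y \<subseteq> V"
    and D1: "\<And>y. y \<in> V \<Longrightarrow> (qinv has_derivative (\<lambda>h. Dqinv y *v h)) (at y)"
    and D2: "\<And>y. y \<in> V \<Longrightarrow> (Dqinv has_derivative D2qinv y) (at y)"
    and bd: "\<And>y h k. y \<in> Y \<Longrightarrow> norm (D2qinv y h *v k) \<le> G * norm h * norm k"
    and ab: "a \<in> Y" "b \<in> Y" and G: "G \<ge> 0"
  shows "norm (qinv b - qinv a - Dqinv a *v (b - a)) \<le> G * (norm (b - a))\<^sup>2"
proof -
  define z where "z s = a + s *\<^sub>R (b - a)" for s :: real
  have zY: "z s \<in> Y" if "0 \<le> s" "s \<le> 1" for s
  proof -
    have "z s = (1 - s) *\<^sub>R a + s *\<^sub>R b" by (simp add: z_def algebra_simps)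
    then show ?thesis using Y(1) ab that by (simp add: convexD)
  qed
  have der: "((\<lambda>s. qinv (z s) - s *\<^sub>R (Dqinv a *v (b - a))) has_derivative
      (\<lambda>t. Dqinv (z s) *v (t *\<^sub>R (b - a)) - t *\<^sub>R (Dqinv a *v (b - a)))) (at s)"
    if "0 \<le> s" "s \<le> 1" for s
  proof -
    have z: "(z has_derivative (\<lambda>t. t *\<^sub>R (b - a))) (at s)"
      unfolding z_def by (auto intro!: derivative_eq_intros)
    have "((\<lambda>s. qinv (z s)) has_derivative (\<lambda>t. Dqinv (z s) *v (t *\<^sub>R (b - a)))) (at s)"
      using diff_chain_at[OF z D1[of "z s"]] zY[OF that] Y(2) by (auto simp: o_def)
    then show ?thesis by (auto intro!: derivative_eq_intros)
  qed
  have "continuous_on {0..1} (\<lambda>s. qinv (z s) - s *\<^sub>R (Dqinv a *v (b - a)))"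
    using der by (meson atLeastAtMost_iff continuous_at_imp_continuous_on has_derivative_continuous)
  from mvt_general[OF zero_less_one this der] obtain s where s: "s \<in> {0<..<1}"
    and le: "norm ((qinv (z 1) - 1 *\<^sub>R (Dqinv a *v (b - a))) - (qinv (z 0) - 0 *\<^sub>R (Dqinv a *v (b - a))))
       \<le> norm (Dqinv (z s) *v ((1 - 0) *\<^sub>R (b - a)) - (1 - 0) *\<^sub>R (Dqinv a *v (b - a)))"
    by fastforce
  have "z 1 = b" "z 0 = a" by (auto simp: z_def)
  then have "norm (qinv b - qinv a - Dqinv a *v (b - a)) \<le> norm ((Dqinv (z s) - Dqinv a) *v (b - a))"
    using le by (simp add: matrix_vector_mult_diff_rdistrib algebra_simps)
  also have "\<dots> \<le> G * norm (z s - a) * norm (b - a)"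
    using mvt_mat[OF Y D2 bd ab(1) zY] s by auto
  also have "\<dots> \<le> G * norm (b - a) * norm (b - a)"
    using s G by (auto simp: z_def intro!: mult_right_mono mult_left_mono mult_left_le_one_le)
  finally show ?thesis by (simp add: power2_eq_square mult.assoc)
qed


lemma step_bd:
  fixes xt xt1 g :: "'a::real_inner"
  assumes X: "convex X" and xt: "xt \<in> X" and xt1: "xt1 \<in> X" and g: "norm g \<le> GF" and eta: "\<eta> > 0"
    and mn: "\<And>x. x \<in> X \<Longrightarrow>
        inner g (xt1 - xt) + 1 / (2 * \<eta>) * (norm (xt1 - xt))\<^sup>2
          \<le> inner g (x - xt) + 1 / (2 * \<eta>) * (norm (x - xt))\<^sup>2"
  shows "norm (xt1 - xt) \<le> \<eta> * GF"
proof (rule ccontr)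
  assume nt: "\<not> ?thesis"
  define d where "d = xt1 - xt"
  define n where "n = norm d"
  have GF: "GF \<ge> 0" using g norm_ge_zero order_trans by blast
  have nbig: "n > \<eta> * GF" using nt by (simp add: n_def d_def)
  have npos: "n > 0" using nbig GF eta by (smt (verit) mult_nonneg_nonneg)
  define a where "a = \<eta> * GF / n"
  have a0: "0 \<le> a" and a1: "a < 1" using npos nbig GF eta by (auto simp: a_def)
  define x where "x = (1 - (1 - a)) *\<^sub>R xt1 + (1 - a) *\<^sub>R xt"
  have xX: "x \<in> X" using a0 a1 X xt xt1 unfolding x_def by (intro convexD) auto
  have xd: "x - xt = a *\<^sub>R d" by (simp add: x_def d_def algebra_simps)
  have "inner g d + 1 / (2 * \<eta>) * n\<^sup>2 \<le> a * inner g d + 1 / (2 * \<eta>) * (a * n)\<^sup>2"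
    using mn[OF xX] a0 unfolding xd by (simp add: d_def n_def)
  then have "inner g d + (n\<^sup>2 / (2 * \<eta>)) \<le> a * inner g d + a\<^sup>2 * (n\<^sup>2 / (2 * \<eta>))"
    by (simp add: power_mult_distrib)
  moreover have "\<And>K gd. gd + K \<le> a * gd + a\<^sup>2 * K \<Longrightarrow> (1 - a) * gd \<le> - ((1 - a) * (1 + a)) * K"
    by (simp add: power2_eq_square algebra_simps)
  ultimately have "(1 - a) * inner g d \<le> - ((1 - a) * (1 + a)) * (n\<^sup>2 / (2 * \<eta>))"
    by blast
  moreover have "\<And>K gd. (1 - a) * gd \<le> - ((1 - a) * (1 + a)) * K \<Longrightarrow> gd \<le> - (1 + a) * K"
  proof -
    fix K gd :: real assume h: "(1 - a) * gd \<le> - ((1 - a) * (1 + a)) * K"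
    have p: "0 < 1 - a" using a1 by simp
    have "(1 - a) * gd \<le> (1 - a) * (- (1 + a) * K)" using h by (simp add: algebra_simps)
    then show "gd \<le> - (1 + a) * K" using p by (simp add: mult_le_cancel_left_pos)
  qed
  ultimately have gd: "inner g d \<le> - (1 + a) * (n\<^sup>2 / (2 * \<eta>))"
    by blast
  have "- (GF * n) \<le> inner g d"
  proof -
    have "\<bar>inner g d\<bar> \<le> norm g * norm d" by (rule Cauchy_Schwarz_ineq2)
    also have "\<dots> \<le> GF * n" using g by (simp add: n_def mult_right_mono)
    finally show ?thesis by linarith
  qed
  with gd have "(1 + a) * (n\<^sup>2 / (2 * \<eta>)) \<le> GF * n" by linarith
  then have "(1 + a) * n\<^sup>2 \<le> 2 * \<eta> * GF * n" using eta by (simp add: field_simps)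
  also have "2 * \<eta> * GF * n = 2 * a * n\<^sup>2" using npos by (simp add: a_def power2_eq_square)
  finally have "(1 + a) * n\<^sup>2 \<le> (2 * a) * n\<^sup>2" by simp
  then have "1 + a \<le> 2 * a" using npos by (simp add: mult_le_cancel_right)
  then show False using a1 by linarith
qed

theorem lemmaA6:
  fixes X Y U V :: "(real^'n) set"
    and q qinv :: "real^'n \<Rightarrow> real^'n"
    and Jq Dqinv :: "real^'n \<Rightarrow> real^'n^'n"
    and D2qinv :: "real^'n \<Rightarrow> real^'n \<Rightarrow> real^'n^'n"
    and R :: "real^'n \<Rightarrow> real"
    and gradR :: "real^'n \<Rightarrow> real^'n"
    and HessR :: "real^'n \<Rightarrow> real^'n^'n"
    and D3R :: "real^'n \<Rightarrow> real^'n \<Rightarrow> real^'n^'n"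
    and G GF \<eta> :: real
    and xt xt1 g :: "real^'n"
  assumes
    \<comment> \<open>X, Y convex compact\<close>
    X: "convex X" "compact X" and Y: "convex Y" "compact Y"
    \<comment> \<open>q : X -> Y smooth bijection: restriction of a differentiable bijection U -> V between
        open neighbourhoods, with differentiable inverse qinv\<close>
    and UV: "open U" "open V" "X \<subseteq> U" "Y \<subseteq> V"
    and q_bij: "bij_betw q X Y" "bij_betw q U V"
    and qinv: "\<And>x. x \<in> U \<Longrightarrow> qinv (q x) = x" "\<And>y. y \<in> V \<Longrightarrow> q (qinv y) = y"
    and Jq: "\<And>x. x \<in> U \<Longrightarrow> (q has_derivative (\<lambda>h. Jq x *v h)) (at x)"
    and Jq_cont: "continuous_on U Jq"
    and Dqinv: "\<And>y. y \<in> V \<Longrightarrow> (qinv has_derivative (\<lambda>h. Dqinv y *v h)) (at y)"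
    and D2qinv: "\<And>y. y \<in> V \<Longrightarrow> (Dqinv has_derivative D2qinv y) (at y)"
    and D2qinv_cont: "continuous_on V D2qinv"
    \<comment> \<open>(A1)\<close>
    and R_deriv: "\<And>y. y \<in> V \<Longrightarrow> (R has_derivative (\<lambda>h. inner (gradR y) h)) (at y)"
    and R_hess: "\<And>y. y \<in> V \<Longrightarrow> (gradR has_derivative (\<lambda>h. HessR y *v h)) (at y)"
    and R_C2: "continuous_on V HessR"
    and R_strict: "strict_convex_on Y R"
    and A1: "\<And>x. x \<in> X \<Longrightarrow> invertible (HessR (q x)) \<and>
                 matrix_inv (HessR (q x)) = Jq x ** transpose (Jq x)"
    \<comment> \<open>(A2)\<close>
    and G_gt: "G > 1"
    and q_lip: "G-lipschitz_on X q"
    and Dqinv_bd: "\<And>y h. y \<in> Y \<Longrightarrow> norm (Dqinv y *v h) \<le> G * norm h"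
    and D2qinv_bd: "\<And>y h k. y \<in> Y \<Longrightarrow> norm (D2qinv y h *v k) \<le> G * norm h * norm k"
    and R_strong: "strongly_convex_on 1 Y R"
    and R_third: "\<And>y. y \<in> V \<Longrightarrow> (HessR has_derivative D3R y) (at y)"
    and gradR_bd: "\<And>y. y \<in> Y \<Longrightarrow> norm (gradR y) \<le> G"
    and D3R_bd: "\<And>y h k l. y \<in> Y \<Longrightarrow>
                   \<bar>inner l (D3R y h *v k)\<bar> \<le> G * norm h * norm k * norm l"
    and DR_lip: "\<And>z. z \<in> Y \<Longrightarrow> G-lipschitz_on Y (\<lambda>w. bregman R gradR z w)"
    \<comment> \<open>the one OGD step\<close>
    and eta: "\<eta> > 0"
    and xt: "xt \<in> X"
    and g: "norm g \<le> GF"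
    and xt1: "xt1 \<in> X"
    and xt1_min: "\<And>x. x \<in> X \<Longrightarrow>
        inner g (xt1 - xt) + 1 / (2 * \<eta>) * (norm (xt1 - xt))\<^sup>2
          \<le> inner g (x - xt) + 1 / (2 * \<eta>) * (norm (x - xt))\<^sup>2"
  shows "\<exists>D. GDERIV (eps_OGD q qinv Jq xt g \<eta>) (q xt1) :> D \<and>
             norm D \<le> G ^ 5 * (3 * GF\<^sup>2 + GF ^ 3 * \<eta>) * \<eta>"
proof -
  define yt where "yt = q xt"
  define y1 where "y1 = q xt1"
  define B where "B = Dqinv yt"
  have xtU: "xt \<in> U" and xt1U: "xt1 \<in> U" using xt xt1 UV by auto
  have ytY: "yt \<in> Y" and y1Y: "y1 \<in> Y"
    using q_bij(1) xt xt1 by (auto simp: yt_def y1_def bij_betw_def)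
  have ytV: "yt \<in> V" and y1V: "y1 \<in> V" using ytY y1Y UV by auto
  have qinv_yt: "qinv yt = xt" using qinv(1)[OF xtU] by (simp add: yt_def)
  have "((qinv \<circ> q) has_derivative (\<lambda>h. B *v (Jq xt *v h))) (at xt)"
    using diff_chain_at[OF Jq[OF xtU] Dqinv[of "q xt", OF ytV[unfolded yt_def]]] by (simp add: B_def yt_def o_def)
  then have "((\<lambda>x. x) has_derivative (\<lambda>h. B *v (Jq xt *v h))) (at xt)"
    by (rule has_derivative_transform_within_open[OF _ UV(1) xtU]) (simp add: qinv(1))
  then have "(\<lambda>h. B *v (Jq xt *v h)) = (\<lambda>h. h)"
    using has_derivative_unique has_derivative_ident by blast
  then have BJ: "B ** Jq xt = mat 1"
    by (intro matrix_eq[THEN iffD2]) (metis matrix_vector_mul_assoc matrix_vector_mul_lid)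
  then have JB: "Jq xt ** B = mat 1" using matrix_left_right_inverse by blast
  have Ainv: "matrix_inv (Jq xt) = B"
    unfolding matrix_inv_def
  proof (rule some_equality)
    show "Jq xt ** B = mat 1 \<and> B ** Jq xt = mat 1" using BJ JB by simp
  next
    fix A' assume "Jq xt ** A' = mat 1 \<and> A' ** Jq xt = mat 1"
    then have "B ** (Jq xt ** A') = B" by (simp add: matrix_mul_rid)
    then show "A' = B" using BJ by (simp add: matrix_mul_assoc matrix_mul_lid)
  qed
  define e where "e y = qinv y - xt - B *v (y - yt)" for y
  have eq_e: "eps_q q qinv Jq xt = e"
    by (rule ext) (simp add: eps_q_def e_def Ainv qinv_yt yt_def[symmetric])
  define M where "M = Dqinv y1 - B"
  define e1 where "e1 = e y1"
  define w where "w = B *v (y1 - yt)"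
  have fun_eq: "eps_OGD q qinv Jq xt g \<eta> =
     (\<lambda>y. inner g (e y) + (1 / \<eta>) * ((1/2) * inner (e y) (e y) + inner (B *v (y - yt)) (e y)))"
    by (rule ext) (simp add: eps_OGD_def eq_e Ainv yt_def[symmetric] power2_norm_eq_inner)
  have de: "(e has_derivative (\<lambda>h. M *v h)) (at y1)"
  proof -
    have "(e has_derivative (\<lambda>h. Dqinv y1 *v h - 0 - B *v (h - 0))) (at y1)"
      unfolding e_def
      by (intro has_derivative_diff Dqinv[OF y1V] has_derivative_const
          bounded_linear.has_derivative[OF matrix_vector_mul_bounded_linear] has_derivative_ident)
    then show ?thesis by (simp add: M_def matrix_vector_mult_diff_rdistrib)
  qed
  define L where "L h = inner g (M *v h) + (1 / \<eta>) * ((1/2) * (inner (M *v h) e1 + inner e1 (M *v h))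
        + (inner (B *v h) e1 + inner w (M *v h)))" for h
  have dB: "((\<lambda>y. B *v (y - yt)) has_derivative (\<lambda>h. B *v h)) (at y1)"
  proof -
    have "((\<lambda>y. y - yt) has_derivative (\<lambda>h. h)) (at y1)" by (auto intro!: derivative_eq_intros)
    then show ?thesis
      using bounded_linear.has_derivative[OF matrix_vector_mul_bounded_linear, of "\<lambda>y. y - yt" "\<lambda>h. h" _ B]
      by blast
  qed
  have dL: "(eps_OGD q qinv Jq xt g \<eta> has_derivative L) (at y1)"
    unfolding fun_eq L_def e1_def w_def
    apply (rule has_derivative_eq_rhs)
     apply (rule derivative_intros de dB | assumption)+
    apply (simp add: fun_eq_iff algebra_simps)
    done
  define D where "D = g v* M + (1 / \<eta>) *\<^sub>R (e1 v* M + e1 v* B + w v* M)"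
  have LD: "L = (\<lambda>h. inner D h)"
  proof (rule ext)
    fix h
    have c: "inner (M *v h) e1 = inner e1 (M *v h)" "inner (B *v h) e1 = inner e1 (B *v h)" by (rule inner_commute)+
    have "inner D h = inner g (M *v h) + (1 / \<eta>) * (inner e1 (M *v h) + inner e1 (B *v h) + inner w (M *v h))"
      by (simp only: D_def inner_add_left inner_scaleR_left dot_lmul_matrix)
    then show "L h = inner D h"
      by (simp only: L_def c) (simp add: field_simps)
  qed
  define \<delta> where "\<delta> = norm (xt1 - xt)"
  define r where "r = norm (y1 - yt)"
  have GF: "GF \<ge> 0" using g norm_ge_zero order_trans by blast
  have G0: "G \<ge> 0" using G_gt by simp
  have \<delta>: "\<delta> \<le> \<eta> * GF" unfolding \<delta>_def by (rule step_bd[OF X(1) xt xt1 g eta xt1_min])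
  have r: "r \<le> G * \<delta>" unfolding r_def \<delta>_def y1_def yt_def
    using lipschitz_onD[OF q_lip xt1 xt] by (simp add: dist_norm)
  have r0: "r \<ge> 0" by (simp add: r_def)
  have Mb: "norm (M *v k) \<le> G * r * norm k" for k
    unfolding M_def B_def r_def using mvt_mat[OF Y(1) UV(4) D2qinv D2qinv_bd ytY y1Y] by simp
  have e1b: "norm e1 \<le> G * r\<^sup>2"
    using mvt_vec[OF Y(1) UV(4) Dqinv D2qinv D2qinv_bd ytY y1Y G0]
    by (simp add: e1_def e_def qinv_yt B_def r_def)
  have wb: "norm w \<le> G * r" unfolding w_def B_def r_def using Dqinv_bd[OF ytY] .
  have Lsimp: "L h = inner g (M *v h) + (1 / \<eta>) * (inner e1 (Dqinv y1 *v h) + inner w (M *v h))" for h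
    by (simp add: L_def M_def matrix_vector_mult_diff_rdistrib inner_diff_right inner_commute algebra_simps)
  define C where "C = GF * (G * r) + (1 / \<eta>) * (G * r\<^sup>2 * G + G * r * (G * r))"
  have Lb: "\<bar>L h\<bar> \<le> C * norm h" for h
  proof -
    have t1: "\<bar>inner g (M *v h)\<bar> \<le> GF * (G * r) * norm h"
    proof -
      have "\<bar>inner g (M *v h)\<bar> \<le> norm g * norm (M *v h)" by (rule Cauchy_Schwarz_ineq2)
      also have "\<dots> \<le> GF * (G * r * norm h)" using g Mb GF by (intro mult_mono) auto
      finally show ?thesis by (simp add: mult.assoc)
    qed
    have t2: "\<bar>inner e1 (Dqinv y1 *v h)\<bar> \<le> G * r\<^sup>2 * G * norm h"
    proof -
      have "\<bar>inner e1 (Dqinv y1 *v h)\<bar> \<le> norm e1 * norm (Dqinv y1 *v h)" by (rule Cauchy_Schwarz_ineq2)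
      also have "\<dots> \<le> (G * r\<^sup>2) * (G * norm h)" using e1b Dqinv_bd[OF y1Y] G0 by (intro mult_mono) auto
      finally show ?thesis by (simp add: mult.assoc)
    qed
    have t3: "\<bar>inner w (M *v h)\<bar> \<le> G * r * (G * r) * norm h"
    proof -
      have "\<bar>inner w (M *v h)\<bar> \<le> norm w * norm (M *v h)" by (rule Cauchy_Schwarz_ineq2)
      also have "\<dots> \<le> (G * r) * (G * r * norm h)" using wb Mb G0 r0 by (intro mult_mono) auto
      finally show ?thesis by (simp add: mult.assoc)
    qed
    have "\<bar>inner e1 (Dqinv y1 *v h) + inner w (M *v h)\<bar> \<le> G * r\<^sup>2 * G * norm h + G * r * (G * r) * norm h"
      using t2 t3 abs_triangle_ineq[of "inner e1 (Dqinv y1 *v h)" "inner w (M *v h)"] by linarith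
    then have "\<bar>inner e1 (Dqinv y1 *v h) + inner w (M *v h)\<bar> \<le> (G * r\<^sup>2 * G + G * r * (G * r)) * norm h"
      by (simp only: distrib_right)
    then have "\<bar>(1 / \<eta>) * (inner e1 (Dqinv y1 *v h) + inner w (M *v h))\<bar>
        \<le> (1 / \<eta>) * ((G * r\<^sup>2 * G + G * r * (G * r)) * norm h)"
      using eta by (simp add: abs_mult divide_le_cancel)
    with t1 have "\<bar>L h\<bar> \<le> GF * (G * r) * norm h + (1 / \<eta>) * ((G * r\<^sup>2 * G + G * r * (G * r)) * norm h)"
      unfolding Lsimp using abs_triangle_ineq[of "inner g (M *v h)" "(1 / \<eta>) * (inner e1 (Dqinv y1 *v h) + inner w (M *v h))"]
      by linarith
    then show ?thesis unfolding C_def by (simp only: distrib_right mult.assoc)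
  qed
  have DC: "norm D \<le> C"
  proof (cases "D = 0")
    case True
    have "C \<ge> 0" unfolding C_def using GF G0 r0 eta by (intro add_nonneg_nonneg mult_nonneg_nonneg) auto
    then show ?thesis using True by simp
  next
    case False
    have "(norm D)\<^sup>2 = L D" by (simp add: LD power2_norm_eq_inner)
    also have "\<dots> \<le> C * norm D" using Lb[of D] by simp
    finally have "norm D * norm D \<le> C * norm D" by (simp add: power2_eq_square)
    then show ?thesis using False by simp
  qed
  have "C \<le> G ^ 5 * (3 * GF\<^sup>2 + GF ^ 3 * \<eta>) * \<eta>"
  proof -
    have rb: "r \<le> G * (\<eta> * GF)" using r \<delta> G0 by (meson mult_left_mono order_trans)
    have rb0: "0 \<le> G * (\<eta> * GF)" using G0 eta GF by simp
    have "C = GF * G * r + 2 * G\<^sup>2 * r\<^sup>2 / \<eta>" by (simp add: C_def power2_eq_square algebra_simps)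
    also have "\<dots> \<le> GF * G * (G * (\<eta> * GF)) + 2 * G\<^sup>2 * (G * (\<eta> * GF))\<^sup>2 / \<eta>"
      using rb r0 G0 GF eta
      by (intro add_mono mult_left_mono divide_right_mono power_mono) auto
    also have "\<dots> = (G\<^sup>2 + 2 * G^4) * GF\<^sup>2 * \<eta>" using eta by (simp add: power2_eq_square field_simps numeral_eq_Suc)
    also have "\<dots> \<le> (3 * G ^ 5) * GF\<^sup>2 * \<eta>"
    proof -
      have "G\<^sup>2 \<le> G ^ 5" using G_gt by (intro power_increasing) auto
      moreover have "G ^ 4 \<le> G ^ 5" using G_gt by (intro power_increasing) auto
      ultimately show ?thesis using eta by (intro mult_right_mono) auto
    qed
    also have "\<dots> \<le> G ^ 5 * (3 * GF\<^sup>2 + GF ^ 3 * \<eta>) * \<eta>"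
      using G0 GF eta by (simp add: algebra_simps)
    finally show ?thesis .
  qed
  with DC have "norm D \<le> G ^ 5 * (3 * GF\<^sup>2 + GF ^ 3 * \<eta>) * \<eta>" by linarith
  moreover have "GDERIV (eps_OGD q qinv Jq xt g \<eta>) (q xt1) :> D"
  proof -
    have cm: "(\<lambda>h. inner h D) = (\<lambda>h. inner D h)" by (rule ext) (rule inner_commute)
    show ?thesis unfolding gderiv_def cm using dL LD y1_def by simp
  qed
  ultimately show ?thesis by blast
qed

end
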